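(* Let $k\ge2$ and $G=BS(1,k)\cong\mathbb{Z}[1/k]\rtimes\mathbb{Z}$. Every conjugacy geodesic $w$ for a conjugacy class $[(x,m)]$ with $m>0$ is, up to a cyclic permutation, of the form $a^{x_0}ta^{x_1}t\cdots a^{x_{m-1}}t$ for some $x_0,\ldots,x_{m-1}\in\mathbb{Z}$.
   Context: $BS(1,k)=\langle a,t\mid tat^{-1}=a^k\rangle$ is identified with $\mathbb{Z}[1/k]\rtimes\mathbb{Z}$ via $a\mapsto(1,0)$, $t\mapsto(0,1)$, the generator of $\mathbb{Z}$ acting by multiplication by $k$; elements are pairs $(x,m)$. $a^x$ denotes $|x|$ copies of $a$ or $a^{-1}$ according to the sign of $x$. Word length is with respect to $\{a,t\}$. A word $w$ is a conjugacy geodesic for the class $[g]$ if it is a geodesic word representing an element of $[g]$ of minimal length among all elements of $[g]$. *)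

theory Defs
  imports Main "HOL.Rat"
begin

text \<open>BS(1,k) realised as Z[1/k] \<rtimes> Z, with Z[1/k] viewed inside the rationals.
  Elements are pairs (x,m); the product is (x,m)(y,n) = (x + k^m y, m + n).
  The generator a is (1,0) and t is (0,1).\<close>

definition bs_mul :: "int \<Rightarrow> rat \<times> int \<Rightarrow> rat \<times> int \<Rightarrow> rat \<times> int" where
  "bs_mul k g h = (fst g + (of_int k) powi (snd g) * fst h, snd g + snd h)"

definition bs_inv :: "int \<Rightarrow> rat \<times> int \<Rightarrow> rat \<times> int" where
  "bs_inv k g = (- ((of_int k) powi (- snd g)) * fst g, - snd g)"

datatype letter = A | Ainv | T | Tinv

fun letter_val :: "int \<Rightarrow> letter \<Rightarrow> rat \<times> int" where
  "letter_val k A = (1, 0)"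
| "letter_val k Ainv = (-1, 0)"
| "letter_val k T = (0, 1)"
| "letter_val k Tinv = (0, -1)"

fun evalw :: "int \<Rightarrow> letter list \<Rightarrow> rat \<times> int" where
  "evalw k [] = (0, 0)"
| "evalw k (l # w) = bs_mul k (letter_val k l) (evalw k w)"

definition BS :: "int \<Rightarrow> (rat \<times> int) set" where
  "BS k = range (evalw k)"

definition wordlen :: "int \<Rightarrow> rat \<times> int \<Rightarrow> nat" where
  "wordlen k g = (LEAST n. \<exists>w. length w = n \<and> evalw k w = g)"

definition geodesic :: "int \<Rightarrow> letter list \<Rightarrow> bool" where
  "geodesic k w \<longleftrightarrow> length w = wordlen k (evalw k w)"

definition conj_class :: "int \<Rightarrow> rat \<times> int \<Rightarrow> (rat \<times> int) set" where
  "conj_class k g = {bs_mul k (bs_mul k h g) (bs_inv k h) | h. h \<in> BS k}"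

definition conj_geodesic :: "int \<Rightarrow> letter list \<Rightarrow> rat \<times> int \<Rightarrow> bool" where
  "conj_geodesic k w g \<longleftrightarrow> geodesic k w \<and> evalw k w \<in> conj_class k g
     \<and> (\<forall>h \<in> conj_class k g. length w \<le> wordlen k h)"

definition apow :: "int \<Rightarrow> letter list" where
  "apow x = replicate (nat \<bar>x\<bar>) (if x \<ge> 0 then A else Ainv)"

end

theory Submission
  imports Defs
begin

lemma bs_mul_assoc:
  assumes "k \<noteq> 0"
  shows "bs_mul k l (bs_mul k p q) = bs_mul k (bs_mul k l p) q"
  using assms by (simp add: bs_mul_def power_int_add algebra_simps)

lemma evalw_append:
  assumes "k \<noteq> 0"
  shows "evalw k (u @ v) = bs_mul k (evalw k u) (evalw k v)"
  using assms by (induction u) (auto simp: bs_mul_assoc, simp add: bs_mul_def)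

definition dyadic :: "int \<Rightarrow> rat \<Rightarrow> bool" where
  "dyadic k z \<longleftrightarrow> (\<exists>n e. z = of_int n / of_int k ^ e)"

lemma dyadic_int: "dyadic k (of_int n)"
  unfolding dyadic_def by (rule exI[of _ n], rule exI[of _ 0]) simp

lemma dyadic_add:
  assumes "k \<noteq> 0" "dyadic k a" "dyadic k b" shows "dyadic k (a + b)"
proof -
  obtain n1 e1 n2 e2 where a: "a = of_int n1 / of_int k ^ e1" and b: "b = of_int n2 / of_int k ^ e2"
    using assms unfolding dyadic_def by blast
  have "a + b = of_int (n1 * k ^ e2 + n2 * k ^ e1) / of_int k ^ (e1 + e2)"
    using assms(1) by (simp add: a b field_simps power_add)
  then show ?thesis unfolding dyadic_def by blast
qed

lemma dyadic_mult_int: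
  assumes "dyadic k a" shows "dyadic k (of_int n * a)"
proof -
  obtain n1 e1 where a: "a = of_int n1 / of_int k ^ e1"
    using assms unfolding dyadic_def by blast
  have "of_int n * a = of_int (n * n1) / of_int k ^ e1" by (simp add: a)
  then show ?thesis unfolding dyadic_def by blast
qed

lemma dyadic_div_pow:
  assumes "dyadic k a" shows "dyadic k (a / of_int k ^ e)"
proof -
  obtain n1 e1 where a: "a = of_int n1 / of_int k ^ e1"
    using assms unfolding dyadic_def by blast
  have "a / of_int k ^ e = of_int n1 / of_int k ^ (e1 + e)" by (simp add: a power_add)
  then show ?thesis unfolding dyadic_def by blast
qed

lemma dyadic_neg: "dyadic k a \<Longrightarrow> dyadic k (- a)"
  using dyadic_mult_int[of k a "-1"] by simp

lemma evalw_Tinvs: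
  assumes "k \<noteq> 0"
  shows "evalw k (replicate e Tinv @ u) = (fst (evalw k u) / of_int k ^ e, snd (evalw k u) - int e)"
  using assms by (induction e) (auto simp: bs_mul_def power_int_minus field_simps)

lemma evalw_Ts:
  shows "evalw k (replicate e T) = (0, int e)"
  by (induction e) (auto simp: bs_mul_def)

lemma evalw_apow: "evalw k (apow y) = (of_int y, 0)"
proof -
  have "evalw k (replicate n A) = (of_nat n, 0)" for n
    by (induction n) (auto simp: bs_mul_def)
  moreover have "evalw k (replicate n Ainv) = (- of_nat n, 0)" for n
    by (induction n) (auto simp: bs_mul_def)
  ultimately show ?thesis by (auto simp: apow_def)
qed

lemma dyadic_BS:
  assumes "k \<noteq> 0" "dyadic k z" shows "(z, 0) \<in> BS k"
proof -
  obtain n e where z: "z = of_int n / of_int k ^ e"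
    using assms unfolding dyadic_def by blast
  have "evalw k (replicate e Tinv @ (apow n @ replicate e T)) = (z, 0)"
    using assms(1) by (subst evalw_Tinvs[OF assms(1)]) (simp add: evalw_append evalw_apow evalw_Ts bs_mul_def z)
  then show ?thesis unfolding BS_def by (metis rangeI)
qed


lemma conj_formula:
  assumes "k \<noteq> 0"
  shows "bs_mul k (bs_mul k (a, j) (x, m)) (bs_inv k (a, j))
         = (a + of_int k powi j * x - of_int k powi m * a, m)"
  using assms by (simp add: bs_mul_def bs_inv_def power_int_add power_int_minus field_simps)

lemma BS_mul: "k \<noteq> 0 \<Longrightarrow> g \<in> BS k \<Longrightarrow> h \<in> BS k \<Longrightarrow> bs_mul k g h \<in> BS k"
proof -
  assume k0: "k \<noteq> 0" and g: "g \<in> BS k" and h: "h \<in> BS k"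
  obtain u v where "g = evalw k u" "h = evalw k v" using g h unfolding BS_def by blast
  then have "bs_mul k g h = evalw k (u @ v)" using evalw_append[OF k0] by simp
  then show ?thesis unfolding BS_def by simp
qed

lemma wordlen_le: "evalw k v = g \<Longrightarrow> wordlen k g \<le> length v"
  unfolding wordlen_def by (rule Least_le) blast

lemma conj_snd:
  assumes k0: "k \<noteq> 0" and cg: "conj_geodesic k w (x, m)"
  shows "snd (evalw k w) = m"
proof -
  from cg have mem: "evalw k w \<in> conj_class k (x, m)"
    unfolding conj_geodesic_def by auto
  from mem obtain a j where
    e: "evalw k w = bs_mul k (bs_mul k (a, j) (x, m)) (bs_inv k (a, j))"
    unfolding conj_class_def by auto
  then show ?thesis using conj_formula[OF k0] by simp
qed

lemma key:
  assumes k: "k \<ge> 2" and cg: "conj_geodesic k w (x, m)" and dz: "dyadic k z"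
    and ev: "evalw k w'' = (fst (evalw k w) + (1 - of_int k powi m) * z, m)"
  shows "length w \<le> length w''" and "snd (evalw k w) = m"
proof -
  have k0: "k \<noteq> 0" using k by simp
  from cg have mem: "evalw k w \<in> conj_class k (x, m)"
    and mn: "\<forall>h \<in> conj_class k (x, m). length w \<le> wordlen k h"
    unfolding conj_geodesic_def by auto
  from mem obtain a j where h: "(a, j) \<in> BS k"
    and e: "evalw k w = bs_mul k (bs_mul k (a, j) (x, m)) (bs_inv k (a, j))"
    unfolding conj_class_def by auto
  have e2: "evalw k w = (a + of_int k powi j * x - of_int k powi m * a, m)"
    using e conj_formula[OF k0] by simp
  then show "snd (evalw k w) = m" by simp
  have "(z, 0) \<in> BS k" using dyadic_BS[OF k0 dz] .
  then have "bs_mul k (z, 0) (a, j) \<in> BS k" using BS_mul[OF k0] h by blast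
  then have h2: "(z + a, j) \<in> BS k" by (simp add: bs_mul_def)
  have "bs_mul k (bs_mul k (z + a, j) (x, m)) (bs_inv k (z + a, j)) = evalw k w''"
    unfolding conj_formula[OF k0] ev e2 by (simp add: algebra_simps)
  then have "evalw k w'' \<in> conj_class k (x, m)"
    unfolding conj_class_def using h2 by (metis (mono_tags, lifting) mem_Collect_eq)
  then have "length w \<le> wordlen k (evalw k w'')" using mn by blast
  also have "\<dots> \<le> length w''" by (rule wordlen_le) simp
  finally show "length w \<le> length w''" .
qed


lemma lemD:
  assumes k0: "k \<noteq> 0" and M: "M > 0"
  shows "\<exists>z0. dyadic k z0 \<and>
    of_int k powi h - of_int k ^ nat (h mod int M) = (1 - of_int k ^ M) * z0"
proof -
  define r where "r = h mod int M"
  define q where "q = h div int M"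
  define K :: rat where "K = of_int k ^ M"
  have r0: "r \<ge> 0" using M by (simp add: r_def)
  have h: "h = int M * q + r" by (simp add: r_def q_def)
  have K0: "K \<noteq> 0" using k0 by (simp add: K_def)
  have pw: "(of_int k :: rat) powi h = K powi q * of_int k ^ nat r"
  proof -
    have "(of_int k :: rat) powi h = of_int k powi (int M * q) * of_int k powi r"
      unfolding h using k0 by (simp add: power_int_add)
    also have "\<dots> = K powi q * of_int k ^ nat r"
      using r0 by (simp add: power_int_mult K_def power_int_nonneg_exp)
    finally show ?thesis .
  qed
  define S where "S n = (\<Sum>i<n. K ^ i)" for n
  have Sint: "S n = of_int (\<Sum>i<n. (k ^ M) ^ i)" for n by (simp add: S_def K_def)
  show ?thesis
  proof (cases "q \<ge> 0")
    case True
    have "K powi q = K ^ nat q" using True by (simp add: power_int_nonneg_exp)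
    then have "of_int k powi h - of_int k ^ nat (h mod int M) = of_int k ^ nat r * (K ^ nat q - 1)"
      unfolding pw r_def[symmetric] by (simp add: algebra_simps)
    also have "\<dots> = (1 - K) * (- (of_int k ^ nat r * S (nat q)))"
      unfolding S_def power_diff_1_eq by (simp add: algebra_simps)
    finally have eq: "of_int k powi h - of_int k ^ nat (h mod int M) = (1 - K) * (- (of_int k ^ nat r * S (nat q)))" .
    have "dyadic k (- (of_int k ^ nat r * S (nat q)))"
      unfolding Sint by (metis dyadic_int of_int_minus of_int_mult of_int_power)
    then show ?thesis using eq K_def by blast
  next
    case False
    define n where "n = nat (- q)"
    have qn: "q = - int n" using False by (simp add: n_def)
    have Kn0: "K ^ n \<noteq> 0" using K0 by simp
    have "K powi q = 1 / K ^ n" by (simp add: qn power_int_minus_divide)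
    then have "of_int k powi h - of_int k ^ nat (h mod int M) = of_int k ^ nat r * (1 - K ^ n) / K ^ n"
      unfolding pw r_def[symmetric] using Kn0 by (simp add: field_simps)
    also have "\<dots> = (1 - K) * (of_int k ^ nat r * S n / K ^ n)"
      unfolding S_def one_diff_power_eq by (simp add: algebra_simps)
    finally have eq: "of_int k powi h - of_int k ^ nat (h mod int M) = (1 - K) * (of_int k ^ nat r * S n / K ^ n)" .
    have "dyadic k (of_int k ^ nat r * S n / of_int k ^ (M * n))"
      unfolding Sint by (intro dyadic_div_pow) (metis dyadic_int of_int_mult of_int_power)
    then have "dyadic k (of_int k ^ nat r * S n / K ^ n)" by (simp add: K_def power_mult)
    then show ?thesis using eq K_def by blast
  qed
qed


fun acount :: "letter list \<Rightarrow> nat" where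
  "acount [] = 0"
| "acount (l # w) = (if l = A \<or> l = Ainv then 1 else 0) + acount w"

fun tcount :: "letter list \<Rightarrow> nat" where
  "tcount [] = 0"
| "tcount (l # w) = (if l = T then 1 else 0) + tcount w"

fun ticount :: "letter list \<Rightarrow> nat" where
  "ticount [] = 0"
| "ticount (l # w) = (if l = Tinv then 1 else 0) + ticount w"

lemma length_counts: "length w = acount w + tcount w + ticount w"
proof (induction w)
  case (Cons l w) then show ?case by (cases l) auto
qed simp

lemma snd_evalw: "snd (evalw k w) = int (tcount w) - int (ticount w)"
proof (induction w)
  case (Cons l w) then show ?case by (cases l) (auto simp: bs_mul_def)
qed simp

lemma ticount_0: "ticount w = 0 \<longleftrightarrow> Tinv \<notin> set w"
  by (induction w) auto

fun cvec :: "nat \<Rightarrow> int \<Rightarrow> letter list \<Rightarrow> nat \<Rightarrow> int" where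
  "cvec M h [] = (\<lambda>r. 0)"
| "cvec M h (A # w) = (\<lambda>r. cvec M h w r + (if r = nat (h mod int M) then 1 else 0))"
| "cvec M h (Ainv # w) = (\<lambda>r. cvec M h w r - (if r = nat (h mod int M) then 1 else 0))"
| "cvec M h (T # w) = cvec M (h + 1) w"
| "cvec M h (Tinv # w) = cvec M (h - 1) w"

lemma C2_step:
  fixes c :: "nat \<Rightarrow> int"
  assumes "r0 < M"
  shows "(\<Sum>r<M. \<bar>c r + (if r = r0 then s else 0)\<bar>) \<le> (\<Sum>r<M. \<bar>c r\<bar>) + \<bar>s\<bar>"
proof -
  have "(\<Sum>r<M. \<bar>c r + (if r = r0 then s else 0)\<bar>) \<le> (\<Sum>r<M. \<bar>c r\<bar> + (if r = r0 then \<bar>s\<bar> else 0))"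
  proof (rule sum_mono)
    fix r show "\<bar>c r + (if r = r0 then s else 0)\<bar> \<le> \<bar>c r\<bar> + (if r = r0 then \<bar>s\<bar> else 0)"
      by (cases "r = r0") (auto simp: abs_triangle_ineq)
  qed
  also have "\<dots> = (\<Sum>r<M. \<bar>c r\<bar>) + \<bar>s\<bar>"
    using assms by (simp add: sum.distrib)
  finally show ?thesis .
qed

lemma C2:
  assumes M: "M > 0"
  shows "(\<Sum>r<M. \<bar>cvec M h w r\<bar>) \<le> int (acount w)"
  using M
proof (induction M h w rule: cvec.induct)
  case (2 M h w)
  have "nat (h mod int M) < M" using 2(2) by (simp add: nat_less_iff)
  from C2_step[OF this, of "cvec M h w" 1] 2 show ?case by simp
next
  case (3 M h w)
  have lt: "nat (h mod int M) < M" using 3(2) by (simp add: nat_less_iff)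
  have e: "cvec M h w r - (if r = nat (h mod int M) then 1 else 0) = cvec M h w r + (if r = nat (h mod int M) then -1 else 0)" for r
    by simp
  from C2_step[OF lt, of "cvec M h w" "-1"] 3 show ?case by (simp only: cvec.simps e) simp
qed auto


lemma sum_delta_pow:
  assumes "r0 < M"
  shows "(\<Sum>r<M. of_int (c r + (if r = r0 then s else 0)) * (of_int k :: rat) ^ r)
       = (\<Sum>r<M. of_int (c r) * of_int k ^ r) + of_int s * of_int k ^ r0"
proof -
  have "(\<Sum>r<M. of_int (c r + (if r = r0 then s else 0)) * (of_int k :: rat) ^ r)
      = (\<Sum>r<M. of_int (c r) * of_int k ^ r + (if r = r0 then of_int s * of_int k ^ r else 0))"
    by (intro sum.cong) (auto simp: algebra_simps)
  also have "\<dots> = (\<Sum>r<M. of_int (c r) * of_int k ^ r) + of_int s * of_int k ^ r0"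
    using assms by (simp add: sum.distrib)
  finally show ?thesis .
qed

lemma C1:
  assumes k0: "k \<noteq> 0" and M: "M > 0"
  shows "\<exists>z. dyadic k z \<and> of_int k powi h * fst (evalw k w)
     - (\<Sum>r<M. of_int (cvec M h w r) * of_int k ^ r) = (1 - of_int k ^ M) * z"
  using M
proof (induction M h w rule: cvec.induct)
  case (1 M h)
  then show ?case using dyadic_int[of k 0] by auto
next
  case (2 M h w)
  have lt: "nat (h mod int M) < M" using 2(2) by (simp add: nat_less_iff)
  obtain z1 where z1: "dyadic k z1" "of_int k powi h * fst (evalw k w)
     - (\<Sum>r<M. of_int (cvec M h w r) * of_int k ^ r) = (1 - of_int k ^ M) * z1" using 2 by blast
  obtain z0 where z0: "dyadic k z0" "of_int k powi h - of_int k ^ nat (h mod int M) = (1 - of_int k ^ M) * z0"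
    using lemD[OF k0 2(2)] by blast
  have "of_int k powi h * fst (evalw k (A # w))
     - (\<Sum>r<M. of_int (cvec M h (A # w) r) * of_int k ^ r) = (1 - of_int k ^ M) * (z0 + z1)"
    using z0(2) z1(2) by (simp only: cvec.simps sum_delta_pow[OF lt]) (simp add: bs_mul_def algebra_simps)
  then show ?case using dyadic_add[OF k0 z0(1) z1(1)] by blast
next
  case (3 M h w)
  have lt: "nat (h mod int M) < M" using 3(2) by (simp add: nat_less_iff)
  obtain z1 where z1: "dyadic k z1" "of_int k powi h * fst (evalw k w)
     - (\<Sum>r<M. of_int (cvec M h w r) * of_int k ^ r) = (1 - of_int k ^ M) * z1" using 3 by blast
  obtain z0 where z0: "dyadic k z0" "of_int k powi h - of_int k ^ nat (h mod int M) = (1 - of_int k ^ M) * z0"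
    using lemD[OF k0 3(2)] by blast
  have e: "cvec M h w r - (if r = nat (h mod int M) then 1 else 0) = cvec M h w r + (if r = nat (h mod int M) then -1 else 0)" for r
    by simp
  have "of_int k powi h * fst (evalw k (Ainv # w))
     - (\<Sum>r<M. of_int (cvec M h (Ainv # w) r) * of_int k ^ r) = (1 - of_int k ^ M) * (- z0 + z1)"
    using z0(2) z1(2) by (simp only: cvec.simps e sum_delta_pow[OF lt]) (simp add: bs_mul_def algebra_simps)
  then show ?case using dyadic_add[OF k0 dyadic_neg[OF z0(1)] z1(1)] by blast
next
  case (4 M h w)
  obtain z1 where z1: "dyadic k z1" "of_int k powi (h + 1) * fst (evalw k w)
     - (\<Sum>r<M. of_int (cvec M (h + 1) w r) * of_int k ^ r) = (1 - of_int k ^ M) * z1" using 4 by blast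
  have "of_int k powi h * fst (evalw k (T # w)) = of_int k powi (h + 1) * fst (evalw k w)"
    using k0 by (simp add: bs_mul_def power_int_add)
  then show ?case using z1 by auto
next
  case (5 M h w)
  obtain z1 where z1: "dyadic k z1" "of_int k powi (h - 1) * fst (evalw k w)
     - (\<Sum>r<M. of_int (cvec M (h - 1) w r) * of_int k ^ r) = (1 - of_int k ^ M) * z1" using 5 by blast
  have "of_int k powi h * fst (evalw k (Tinv # w)) = of_int k powi (h - 1) * fst (evalw k w)"
    using k0 by (simp add: bs_mul_def power_int_diff power_int_minus field_simps)
  then show ?case using z1 by auto
qed


definition aword :: "letter list \<Rightarrow> bool" where
  "aword s \<longleftrightarrow> set s \<subseteq> {A, Ainv}"

fun aval :: "letter list \<Rightarrow> int" where
  "aval [] = 0"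
| "aval (l # s) = (if l = A then 1 else if l = Ainv then -1 else 0) + aval s"

fun polyval :: "int \<Rightarrow> int list \<Rightarrow> rat" where
  "polyval k [] = 0"
| "polyval k (y # ys) = of_int y + of_int k * polyval k ys"

lemma aval_append: "aval (s @ t) = aval s + aval t"
  by (induction s) auto

lemma aword_append: "aword (s @ t) \<longleftrightarrow> aword s \<and> aword t"
  by (auto simp: aword_def)

lemma evalw_aword: "aword s \<Longrightarrow> evalw k s = (of_int (aval s), 0)"
  by (induction s) (auto simp: aword_def bs_mul_def)

lemma evalw_segs:
  assumes k0: "k \<noteq> 0"
  shows "(\<forall>s\<in>set L. aword s) \<Longrightarrow>
    evalw k (concat (map (\<lambda>s. s @ [T]) L)) = (polyval k (map aval L), int (length L))"
  by (induction L) (auto simp: evalw_append[OF k0] evalw_aword bs_mul_def)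

lemma aword_apow: "aword (apow y)" and aval_apow: "aval (apow y) = y"
proof -
  have "aval (replicate n A) = int n" for n by (induction n) auto
  moreover have "aval (replicate n Ainv) = - int n" for n by (induction n) auto
  ultimately show "aval (apow y) = y" by (auto simp: apow_def)
  show "aword (apow y)" by (auto simp: apow_def aword_def)
qed

lemma length_apow: "length (apow y) = nat \<bar>y\<bar>"
  by (simp add: apow_def)

lemma polyval_snoc: "polyval k (xs @ [y]) = polyval k xs + of_int y * of_int k ^ length xs"
  by (induction xs) (auto simp: algebra_simps)

lemma polyval_upt: "polyval k (map f [0..<n]) = (\<Sum>r<n. of_int (f r) * of_int k ^ r)"
  by (induction n) (auto simp: polyval_snoc)

lemma aval_le: "aword s \<Longrightarrow> \<bar>aval s\<bar> \<le> int (length s)"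
  by (induction s) (auto simp: aword_def)

lemma aval_eq:
  "aword s \<Longrightarrow> \<bar>aval s\<bar> = int (length s) \<Longrightarrow> s = apow (aval s)"
proof (induction s)
  case Nil
  then show ?case by (simp add: apow_def)
next
  case (Cons l s)
  have ws: "aword s" using Cons(2) by (simp add: aword_def)
  have le: "\<bar>aval s\<bar> \<le> int (length s)" using aval_le[OF ws] .
  show ?case
  proof (cases "l = A")
    case True
    then have "\<bar>1 + aval s\<bar> = 1 + int (length s)" using Cons(3) by simp
    then have v: "aval s = int (length s)" using le by linarith
    then have "s = apow (aval s)" using Cons(1)[OF ws] by simp
    then have "s = replicate (length s) A" using v by (simp add: apow_def)
    moreover have "nat (1 + int (length s)) = Suc (length s)" by simp
    ultimately show ?thesis using True v by (simp add: apow_def)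
  next
    case False
    then have l: "l = Ainv" using Cons(2) by (simp add: aword_def)
    then have "\<bar>-1 + aval s\<bar> = 1 + int (length s)" using Cons(3) by simp
    then have v: "aval s = - int (length s)" using le by linarith
    then have "s = apow (aval s)" using Cons(1)[OF ws] by simp
    then have "s = replicate (length s) Ainv" using v by (cases "length s = 0") (auto simp: apow_def)
    moreover have "nat (int (length s) + 1) = Suc (length s)" by simp
    ultimately show ?thesis using l v by (simp add: apow_def)
  qed
qed

lemma decomp:
  "Tinv \<notin> set w \<Longrightarrow> \<exists>segs tl. w = concat (map (\<lambda>s. s @ [T]) segs) @ tl \<and>
     (\<forall>s\<in>set segs. aword s) \<and> aword tl \<and> length segs = tcount w"
proof (induction w)
  case Nil
  then show ?case by (rule_tac x="[]" in exI, rule_tac x="[]" in exI) (simp add: aword_def)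
next
  case (Cons l w)
  then obtain segs tl where st: "w = concat (map (\<lambda>s. s @ [T]) segs) @ tl"
     "\<forall>s\<in>set segs. aword s" "aword tl" "length segs = tcount w" by auto
  show ?case
  proof (cases "l = T")
    case True
    then show ?thesis using st
      by (rule_tac x="[] # segs" in exI, rule_tac x="tl" in exI) (simp add: aword_def)
  next
    case False
    then have la: "l = A \<or> l = Ainv" using Cons(2) by (cases l) auto
    show ?thesis
    proof (cases segs)
      case Nil
      then show ?thesis using st la False
        by (rule_tac x="[]" in exI, rule_tac x="l # tl" in exI) (auto simp: aword_def)
    next
      case (Cons s rest)
      then show ?thesis using st la False
        by (rule_tac x="(l # s) # rest" in exI, rule_tac x="tl" in exI) (auto simp: aword_def)
    qed
  qed
qed

lemma sum_list_eq:
  fixes f g :: "'a \<Rightarrow> nat"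
  shows "\<forall>s\<in>set L. f s \<le> g s \<Longrightarrow> sum_list (map g L) \<le> sum_list (map f L) \<Longrightarrow> \<forall>s\<in>set L. f s = g s"
proof (induction L)
  case (Cons a L)
  have "sum_list (map f L) \<le> sum_list (map g L)" using Cons(2) by (intro sum_list_mono) auto
  then show ?case using Cons by fastforce
qed simp


lemma length_segs: "length (concat (map (\<lambda>y. apow y @ [T]) ys)) = sum_list (map (\<lambda>y. nat \<bar>y\<bar> + 1) ys)"
  by (induction ys) (auto simp: length_apow)

lemma sum_list_upt_map: "sum_list (map g (map f [0..<n])) = (\<Sum>r<n. g (f r))"
  by (induction n) auto

lemma sum_Suc_lt: "(\<Sum>r<n. Suc (f r)) = n + (\<Sum>r<n. f r)"
  by (induction n) auto

lemma evalw_apow_segs: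
  assumes "k \<noteq> 0"
  shows "evalw k (concat (map (\<lambda>y. apow y @ [T]) ys)) = (polyval k ys, int (length ys))"
  by (induction ys) (auto simp: evalw_append[OF assms] evalw_apow bs_mul_def)

theorem proposition4p2:
  fixes k :: int and x :: rat and m :: int and w :: "letter list"
  assumes "k \<ge> 2"
    and "(x, m) \<in> BS k"
    and "m > 0"
    and "conj_geodesic k w (x, m)"
  shows "\<exists>n xs. length xs = nat m \<and>
           rotate n w = concat (map (\<lambda>y. apow y @ [T]) xs)"
proof -
  have k0: "k \<noteq> 0" using assms(1) by simp
  define M where "M = nat m"
  have mM: "m = int M" and M0: "M > 0" using assms(3) by (auto simp: M_def)
  have pm: "(of_int k :: rat) powi m = of_int k ^ M" by (simp add: mM)
  have sndw: "snd (evalw k w) = m"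
    using conj_snd[OF k0 assms(4)] .
  then have tc: "int (tcount w) - int (ticount w) = int M" by (simp add: snd_evalw mM)
  have ti0: "ticount w = 0"
  proof (rule ccontr)
    assume ne: "ticount w \<noteq> 0"
    define c where "c = cvec M 0 w"
    define ys where "ys = map c [0..<M]"
    define w'' where "w'' = concat (map (\<lambda>y. apow y @ [T]) ys)"
    obtain z where z: "dyadic k z" "of_int k powi 0 * fst (evalw k w)
     - (\<Sum>r<M. of_int (c r) * of_int k ^ r) = (1 - of_int k ^ M) * z"
      using C1[OF k0 M0, of 0 w] unfolding c_def by blast
    have "evalw k w'' = (\<Sum>r<M. of_int (c r) * of_int k ^ r, m)"
      unfolding w''_def evalw_apow_segs[OF k0] ys_def polyval_upt by (simp add: mM)
    also have "\<dots> = (fst (evalw k w) + (1 - of_int k powi m) * (- z), m)"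
      using z(2) unfolding pm by (simp add: algebra_simps)
    finally have ev: "evalw k w'' = (fst (evalw k w) + (1 - of_int k powi m) * (- z), m)" .
    have "length w \<le> length w''" using key(1)[OF assms(1) assms(4) dyadic_neg[OF z(1)] ev] .
    also have "length w'' = M + (\<Sum>r<M. nat \<bar>c r\<bar>)"
      unfolding w''_def length_segs ys_def sum_list_upt_map by (simp add: sum_Suc_lt)
    finally have l1: "length w \<le> M + (\<Sum>r<M. nat \<bar>c r\<bar>)" .
    have "int (\<Sum>r<M. nat \<bar>c r\<bar>) = (\<Sum>r<M. \<bar>c r\<bar>)" by simp
    also have "\<dots> \<le> int (acount w)" unfolding c_def by (rule C2[OF M0])
    finally have "(\<Sum>r<M. nat \<bar>c r\<bar>) \<le> acount w" by linarith
    then show False using l1 length_counts[of w] tc ne by linarith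
  qed
  then have nT: "Tinv \<notin> set w" by (simp add: ticount_0)
  have tcM: "tcount w = M" using tc ti0 by simp
  obtain segs tl where st: "w = concat (map (\<lambda>s. s @ [T]) segs) @ tl"
     "\<forall>s\<in>set segs. aword s" "aword tl" "length segs = tcount w"
    using decomp[OF nT] by blast
  then obtain s0 rest where sr: "segs = s0 # rest" using tcM M0 by (cases segs) auto
  define P where "P = concat (map (\<lambda>s. s @ [T]) segs)"
  define segs' where "segs' = (tl @ s0) # rest"
  have aw': "\<forall>s\<in>set segs'. aword s" using st sr by (auto simp: segs'_def aword_append)
  have rot: "rotate (length P) w = concat (map (\<lambda>s. s @ [T]) segs')"
  proof -
    have "rotate (length P) w = tl @ P" using st(1) unfolding P_def[symmetric] by (simp only: rotate_append)
    then show ?thesis by (simp add: segs'_def sr P_def)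
  qed
  define ys where "ys = map aval segs'"
  define w'' where "w'' = concat (map (\<lambda>y. apow y @ [T]) ys)"
  have lys: "length ys = M" using st(4) tcM sr by (simp add: ys_def segs'_def)
  have "evalw k w = bs_mul k (polyval k (map aval segs), int M) (of_int (aval tl), 0)"
    using st evalw_segs[OF k0, of segs] tcM by (simp add: evalw_append[OF k0] evalw_aword)
  then have fw: "fst (evalw k w) = polyval k (map aval segs) + of_int k ^ M * of_int (aval tl)"
    by (simp add: bs_mul_def)
  have "evalw k w'' = (polyval k ys, m)"
    unfolding w''_def evalw_apow_segs[OF k0] lys mM by simp
  also have "polyval k ys = fst (evalw k w) + (1 - of_int k powi m) * of_int (aval tl)"
    unfolding fw pm ys_def segs'_def sr by (simp add: aval_append algebra_simps)
  finally have ev: "evalw k w'' = (fst (evalw k w) + (1 - of_int k powi m) * of_int (aval tl), m)" .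
  have "length w \<le> length w''" using key(1)[OF assms(1) assms(4) dyadic_int ev] .
  also have "length w'' = sum_list (map (\<lambda>s. nat \<bar>aval s\<bar> + 1) segs')"
    unfolding w''_def length_segs ys_def by (simp add: comp_def)
  finally have l1: "length w \<le> sum_list (map (\<lambda>s. nat \<bar>aval s\<bar> + 1) segs')" .
  have "length w = length (rotate (length P) w)" by simp
  also have "\<dots> = sum_list (map (\<lambda>s. length s + 1) segs')"
    unfolding rot by (simp add: length_concat comp_def)
  finally have l2: "length w = sum_list (map (\<lambda>s. length s + 1) segs')" .
  have "\<forall>s\<in>set segs'. nat \<bar>aval s\<bar> + 1 = length s + 1"
  proof (rule sum_list_eq)
    show "\<forall>s\<in>set segs'. nat \<bar>aval s\<bar> + 1 \<le> length s + 1"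
      using aw' aval_le by (metis add_le_mono1 nat_le_iff)
  qed (use l1 l2 in simp)
  then have eqs: "\<forall>s\<in>set segs'. s = apow (aval s)"
    using aw' aval_eq by fastforce
  have "rotate (length P) w = concat (map (\<lambda>y. apow y @ [T]) ys)"
    unfolding rot ys_def using eqs by (simp add: comp_def) (metis (no_types, lifting) map_cong)
  then show ?thesis using lys M_def by blast
qed

end
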